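(* Fix $\alpha>0$, $\gamma>0$, $\Sigma_\epsilon>0$, $\omega_1\in[0,1)$, $\omega_2\in[0,1]$. Let $$T(x)=\left(\frac{\omega_2}{x^2}+\frac{(1-\omega_2)\alpha^2\gamma^2\Sigma_\epsilon}{(1+\gamma-x)^2}\right)^{-1/2},\qquad f_y(x)=\left(\frac{\omega_1}{x^2}+\frac{(1-\omega_1)\gamma^2\alpha^2\Sigma_\epsilon}{(1+\gamma-y)^2}\right)^{-1/2},$$ and $A(\lambda)=\frac{\gamma^2\alpha^2\Sigma_\epsilon}{(1+\gamma-\lambda)^2}$. Let $J\subset[1,1+\gamma)$ be a compact $T$-invariant interval, let $\hat I$ be the set of bi-infinite sequences $\pmb\lambda=(\lambda_{2,i})_{i\in\mathbb Z}$ in $J$ with $T(\lambda_{2,i})=\lambda_{2,i+1}$ for all $i$, and let $\hat T:\hat I\to\hat I$ be the shift $\hat T((\lambda_{2,i})_i)=(\lambda_{2,i+1})_i$. Then the random fixed point of the forced bank, i.e. the function $x:\hat I\to(0,\infty)$ satisfying $f_{\lambda_{2,0}}(x(\pmb\lambda))=x(\hat T(\pmb\lambda))$ for all $\pmb\lambda\in\hat I$, is given by $$x(\pmb\lambda)=\frac{1}{\sqrt{(1-\omega_1)\sum_{i=0}^{\infty}A(\lambda_{2,-1-i})\,\omega_1^{\,i}}}$$ (with $\omega_1^0=1$); in particular this series converges, $x$ is positive and satisfies the stated relation.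
   Context: This is the case $\pi_1=0$ of the two-bank leverage model: the large bank's leverage evolves by $\lambda_{2,t+1}=T(\lambda_{2,t})$ and the small bank's by $\lambda_{1,t+1}=f_{\lambda_{2,t}}(\lambda_{1,t})$; $\hat T$ is the invertible (natural) extension of $T$. *)

theory Defs
  imports "HOL-Analysis.Analysis"
begin

definition Tmap :: "real \<Rightarrow> real \<Rightarrow> real \<Rightarrow> real \<Rightarrow> real \<Rightarrow> real" where
  "Tmap \<alpha> \<gamma> \<Sigma> \<omega>2 x =
     (\<omega>2 / x^2 + (1 - \<omega>2) * \<alpha>^2 * \<gamma>^2 * \<Sigma> / (1 + \<gamma> - x)^2) powr (-1/2)"

definition fmap :: "real \<Rightarrow> real \<Rightarrow> real \<Rightarrow> real \<Rightarrow> real \<Rightarrow> real \<Rightarrow> real" where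
  "fmap \<alpha> \<gamma> \<Sigma> \<omega>1 y x =
     (\<omega>1 / x^2 + (1 - \<omega>1) * \<gamma>^2 * \<alpha>^2 * \<Sigma> / (1 + \<gamma> - y)^2) powr (-1/2)"

definition Afun :: "real \<Rightarrow> real \<Rightarrow> real \<Rightarrow> real \<Rightarrow> real" where
  "Afun \<alpha> \<gamma> \<Sigma> l = \<gamma>^2 * \<alpha>^2 * \<Sigma> / (1 + \<gamma> - l)^2"

definition Ihat :: "(real \<Rightarrow> real) \<Rightarrow> real set \<Rightarrow> (int \<Rightarrow> real) set" where
  "Ihat T J = {lam. (\<forall>i. lam i \<in> J) \<and> (\<forall>i. T (lam i) = lam (i + 1))}"

definition That :: "(int \<Rightarrow> real) \<Rightarrow> (int \<Rightarrow> real)" where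
  "That lam = (\<lambda>i. lam (i + 1))"

end

theory Submission
  imports Defs
begin

lemma powr_mhalf: "(y::real) > 0 \<Longrightarrow> y powr (-1/2) = 1 / sqrt y"
proof -
  assume y: "y > 0"
  have e: "-1/2 = -(1/2::real)" by simp
  have "y powr (-1/2) = inverse (y powr (1/2))" unfolding e by (rule powr_minus)
  also have "y powr (1/2) = sqrt y" using y by (intro powr_half_sqrt) simp
  also have "inverse (sqrt y) = 1 / sqrt y" by (rule inverse_eq_divide)
  finally show ?thesis .
qed

theorem mainTheorem5:
  fixes \<alpha> \<gamma> \<Sigma> \<omega>1 \<omega>2 a b :: real and J :: "real set"
  assumes "\<alpha> > 0" and "\<gamma> > 0" and "\<Sigma> > 0"
    and "0 \<le> \<omega>1" and "\<omega>1 < 1" and "0 \<le> \<omega>2" and "\<omega>2 \<le> 1"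
    and "J = {a..b}" and "a \<le> b" and "J \<subseteq> {1..<1 + \<gamma>}"
    and "Tmap \<alpha> \<gamma> \<Sigma> \<omega>2 ` J \<subseteq> J"
  defines "x \<equiv> (\<lambda>lam::int \<Rightarrow> real. 1 / sqrt ((1 - \<omega>1) *
              (\<Sum>i. Afun \<alpha> \<gamma> \<Sigma> (lam (-1 - int i)) * \<omega>1 ^ i)))"
  shows "\<forall>lam \<in> Ihat (Tmap \<alpha> \<gamma> \<Sigma> \<omega>2) J.
           summable (\<lambda>i. Afun \<alpha> \<gamma> \<Sigma> (lam (-1 - int i)) * \<omega>1 ^ i)
         \<and> x lam > 0
         \<and> fmap \<alpha> \<gamma> \<Sigma> \<omega>1 (lam 0) (x lam) = x (That lam)"
proof
  fix lam assume "lam \<in> Ihat (Tmap \<alpha> \<gamma> \<Sigma> \<omega>2) J"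
  hence lJ: "\<And>i. lam i \<in> J" by (simp add: Ihat_def)
  have bb: "b < 1 + \<gamma>" using assms(8,9,10) by auto
  define M where "M = \<gamma>^2 * \<alpha>^2 * \<Sigma> / (1 + \<gamma> - b)^2"
  have Apos: "Afun \<alpha> \<gamma> \<Sigma> (lam i) > 0" for i
  proof -
    have "lam i < 1 + \<gamma>" using lJ[of i] assms(10) by auto
    thus ?thesis using assms(1,2,3) by (simp add: Afun_def)
  qed
  have Ale: "Afun \<alpha> \<gamma> \<Sigma> (lam i) \<le> M" for i
  proof -
    have li: "lam i \<le> b" using lJ[of i] assms(8) by auto
    have h1: "(1 + \<gamma> - b)^2 \<le> (1 + \<gamma> - lam i)^2" using li bb by (intro power_mono) auto
    have h2: "0 < (1 + \<gamma> - lam i)^2 * (1 + \<gamma> - b)^2" using bb li by simp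
    have h3: "0 \<le> \<gamma>^2 * \<alpha>^2 * \<Sigma>" using assms(3) by simp
    show ?thesis unfolding Afun_def M_def
      using divide_left_mono[OF h1 h3 h2] .
  qed
  define f where "f = (\<lambda>i::nat. Afun \<alpha> \<gamma> \<Sigma> (lam (-1 - int i)) * \<omega>1 ^ i)"
  define g where "g = (\<lambda>i::nat. Afun \<alpha> \<gamma> \<Sigma> (lam (- int i)) * \<omega>1 ^ i)"
  have fnn: "0 \<le> f i" for i unfolding f_def using Apos assms(4) by (simp add: less_imp_le)
  have sf: "summable f"
  proof (rule summable_comparison_test'[where g="\<lambda>i. M * \<omega>1 ^ i"])
    show "summable (\<lambda>i. M * \<omega>1 ^ i)" using assms(4,5) by (intro summable_mult summable_geometric) simp
    fix n show "norm (f n) \<le> M * \<omega>1 ^ n" unfolding f_def using Ale Apos assms(4)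
      by (simp add: abs_of_nonneg less_imp_le mult_right_mono)
  qed
  have Spos: "suminf f > 0"
    by (rule suminf_pos2[OF sf fnn, of 0]) (simp add: f_def Apos)
  have "f sums suminf f" using sf by (simp add: summable_sums)
  hence "(\<lambda>n. \<omega>1 * f n) sums (\<omega>1 * suminf f)" by (rule sums_mult)
  moreover have "(\<lambda>n. g (Suc n)) = (\<lambda>n. \<omega>1 * f n)"
  proof
    fix n
    have "- int (Suc n) = -1 - int n" by simp
    thus "g (Suc n) = \<omega>1 * f n" unfolding g_def f_def by (simp only: power_Suc) (simp add: algebra_simps)
  qed
  ultimately have "(\<lambda>n. g (Suc n)) sums (\<omega>1 * suminf f)" by simp
  hence "g sums (\<omega>1 * suminf f + g 0)" by (simp add: sums_Suc_iff)
  hence gs: "suminf g = \<omega>1 * suminf f + Afun \<alpha> \<gamma> \<Sigma> (lam 0)"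
    by (simp add: sums_iff g_def)
  have eqg: "(\<lambda>i. Afun \<alpha> \<gamma> \<Sigma> (That lam (-1 - int i)) * \<omega>1 ^ i) = g"
  proof
    fix i
    have "-1 - int i + 1 = - int i" by simp
    thus "Afun \<alpha> \<gamma> \<Sigma> (That lam (-1 - int i)) * \<omega>1 ^ i = g i"
      unfolding That_def g_def by (simp only:)
  qed
  have xT: "x (That lam) = 1 / sqrt ((1 - \<omega>1) * suminf g)"
    unfolding x_def eqg by (rule refl)
  have xl: "x lam = 1 / sqrt ((1 - \<omega>1) * suminf f)" unfolding x_def f_def by (rule refl)
  have P: "(1 - \<omega>1) * suminf f > 0" using Spos assms(5) by simp
  have xpos: "x lam > 0" using xl P by simp
  have x2: "(x lam)^2 = 1 / ((1 - \<omega>1) * suminf f)"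
    using P unfolding xl by (simp add: power_divide)
  have t1: "\<omega>1 / (x lam)^2 = \<omega>1 * ((1 - \<omega>1) * suminf f)" unfolding x2 by simp
  have t2: "(1 - \<omega>1) * \<gamma>^2 * \<alpha>^2 * \<Sigma> / (1 + \<gamma> - lam 0)^2 = (1 - \<omega>1) * Afun \<alpha> \<gamma> \<Sigma> (lam 0)"
    unfolding Afun_def by simp
  have Q: "(1 - \<omega>1) * suminf g > 0"
  proof -
    have "suminf g \<ge> Afun \<alpha> \<gamma> \<Sigma> (lam 0)" unfolding gs using Spos assms(4) by simp
    hence "suminf g > 0" using Apos[of 0] by linarith
    thus ?thesis using assms(5) by simp
  qed
  have "fmap \<alpha> \<gamma> \<Sigma> \<omega>1 (lam 0) (x lam) =
        (\<omega>1 * ((1 - \<omega>1) * suminf f) + (1 - \<omega>1) * Afun \<alpha> \<gamma> \<Sigma> (lam 0)) powr (-1/2)"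
    unfolding fmap_def t1 t2 by (rule refl)
  also have "\<omega>1 * ((1 - \<omega>1) * suminf f) + (1 - \<omega>1) * Afun \<alpha> \<gamma> \<Sigma> (lam 0) = (1 - \<omega>1) * suminf g"
    unfolding gs by (simp add: algebra_simps)
  also have "((1 - \<omega>1) * suminf g) powr (-1/2) = x (That lam)" unfolding xT
    using Q by (rule powr_mhalf)
  finally have F: "fmap \<alpha> \<gamma> \<Sigma> \<omega>1 (lam 0) (x lam) = x (That lam)" .
  show "summable (\<lambda>i. Afun \<alpha> \<gamma> \<Sigma> (lam (-1 - int i)) * \<omega>1 ^ i) \<and> x lam > 0
         \<and> fmap \<alpha> \<gamma> \<Sigma> \<omega>1 (lam 0) (x lam) = x (That lam)"
    using sf xpos F unfolding f_def by blast
qed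

end
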